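(* Let $\mathbf P=(P,\leq,{}',0,1)$ be an orthogonal orthocomplemented lub-complete poset. Then the following conditions are equivalent: (i) $\mathbf P$ is a Boolean algebra. (ii) There exists a binary operator $\odot_C$ such that $x\odot_C y\leq_1 z$ if and only if $x\leq_2 y\rightarrow_C z$ for all $x,y,z\in P$.
   Context: $(P,\leq,{}',0,1)$ is a bounded poset with an antitone involution ${}'$; orthogonal means $x\leq y'$ implies $x\vee y$ exists; orthocomplemented means $x\vee x'=1$ for all $x$; lub-complete means for every lower bound $x$ of a finite subset $M$ there is a maximal lower bound of $M$ above $x$. For $A\subseteq P$, $U(A)$ is the set of upper bounds, $U(x,y)=U(\{x,y\})$, $\mathrm{Min}\,A$ is the set of minimal elements of $A$. The classical implication is $x\rightarrow_C y:=\mathrm{Min}\,U(x',y)\subseteq P$. The operator $\odot_C$ is a map $P^2\to 2^P$ (elements identified with singletons). For $A,B\subseteq P$: $A\leq_1 B$ means for every $x\in A$ there is $y\in B$ with $x\leq y$; $A\leq_2 B$ means for every $y\in B$ there is $x\in A$ with $x\leq y$. *)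

theory Defs
  imports Main
begin

text \<open>The poset is the whole type 'a with its order; the antitone involution is c,
  the bounds are zero and one.\<close>

definition UB :: "'a::order set \<Rightarrow> 'a set" where
  "UB A = {z. \<forall>a\<in>A. a \<le> z}"

definition LB :: "'a::order set \<Rightarrow> 'a set" where
  "LB A = {z. \<forall>a\<in>A. z \<le> a}"

definition MinS :: "'a::order set \<Rightarrow> 'a set" where
  "MinS A = {x\<in>A. \<forall>y\<in>A. y \<le> x \<longrightarrow> y = x}"

definition MaxS :: "'a::order set \<Rightarrow> 'a set" where
  "MaxS A = {x\<in>A. \<forall>y\<in>A. x \<le> y \<longrightarrow> y = x}"

definition is_sup :: "'a::order \<Rightarrow> 'a \<Rightarrow> 'a \<Rightarrow> bool" where
  "is_sup x y s \<longleftrightarrow> s \<in> UB {x, y} \<and> (\<forall>w\<in>UB {x, y}. s \<le> w)"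

definition is_inf :: "'a::order \<Rightarrow> 'a \<Rightarrow> 'a \<Rightarrow> bool" where
  "is_inf x y s \<longleftrightarrow> s \<in> LB {x, y} \<and> (\<forall>w\<in>LB {x, y}. w \<le> s)"

definition join :: "'a::order \<Rightarrow> 'a \<Rightarrow> 'a" where
  "join x y = (THE s. is_sup x y s)"

definition meet :: "'a::order \<Rightarrow> 'a \<Rightarrow> 'a" where
  "meet x y = (THE s. is_inf x y s)"

definition bounded_inv_poset :: "('a::order \<Rightarrow> 'a) \<Rightarrow> 'a \<Rightarrow> 'a \<Rightarrow> bool" where
  "bounded_inv_poset c zero one \<longleftrightarrow>
     (\<forall>x. zero \<le> x \<and> x \<le> one) \<and>
     (\<forall>x y. x \<le> y \<longrightarrow> c y \<le> c x) \<and> (\<forall>x. c (c x) = x)"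

definition orthogonal :: "('a::order \<Rightarrow> 'a) \<Rightarrow> bool" where
  "orthogonal c \<longleftrightarrow> (\<forall>x y. x \<le> c y \<longrightarrow> (\<exists>s. is_sup x y s))"

definition orthocomplemented :: "('a::order \<Rightarrow> 'a) \<Rightarrow> 'a \<Rightarrow> bool" where
  "orthocomplemented c one \<longleftrightarrow> (\<forall>x. is_sup x (c x) one)"

definition lub_complete :: "'a::order itself \<Rightarrow> bool" where
  "lub_complete _ \<longleftrightarrow>
     (\<forall>M::'a set. finite M \<longrightarrow> (\<forall>x\<in>LB M. \<exists>y\<in>MaxS (LB M). x \<le> y))"

definition boolean_alg :: "('a::order \<Rightarrow> 'a) \<Rightarrow> 'a \<Rightarrow> 'a \<Rightarrow> bool" where
  "boolean_alg c zero one \<longleftrightarrow>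
     (\<forall>x y::'a. (\<exists>s. is_sup x y s) \<and> (\<exists>i. is_inf x y i)) \<and>
     (\<forall>x y z::'a. join x (meet y z) = meet (join x y) (join x z)) \<and>
     (\<forall>x. join x (c x) = one \<and> meet x (c x) = zero)"

definition implC :: "('a::order \<Rightarrow> 'a) \<Rightarrow> 'a \<Rightarrow> 'a \<Rightarrow> 'a set" where
  "implC c x y = MinS (UB {c x, y})"

definition leq1 :: "'a::order set \<Rightarrow> 'a set \<Rightarrow> bool" where
  "leq1 A B \<longleftrightarrow> (\<forall>x\<in>A. \<exists>y\<in>B. x \<le> y)"

definition leq2 :: "'a::order set \<Rightarrow> 'a set \<Rightarrow> bool" where
  "leq2 A B \<longleftrightarrow> (\<forall>y\<in>B. \<exists>x\<in>A. x \<le> y)"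

end

theory Submission
  imports Defs
begin

lemma is_sup_join: "is_sup x y s \<Longrightarrow> join x y = s"
  unfolding join_def
  by (rule the_equality) (auto simp: is_sup_def UB_def intro: antisym)

lemma is_inf_meet: "is_inf x y s \<Longrightarrow> meet x y = s"
  unfolding meet_def
  by (rule the_equality) (auto simp: is_inf_def LB_def intro: antisym)

locale bl0 =
  fixes c :: "'a::order \<Rightarrow> 'a" and zero one :: 'a
  assumes bip: "bounded_inv_poset c zero one"
    and H: "\<forall>x y::'a. (\<exists>s. is_sup x y s) \<and> (\<exists>i. is_inf x y i)"
begin

lemma bot: "zero \<le> x" and top: "x \<le> one" and anti: "x \<le> y \<Longrightarrow> c y \<le> c x"
  and cc[simp]: "c (c x) = x"
  using bip unfolding bounded_inv_poset_def by auto

lemma c_le: "c x \<le> y \<longleftrightarrow> c y \<le> x"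
  by (metis anti cc)

lemma join_ge1: "(x::'a) \<le> join x y" and join_ge2: "y \<le> join x y"
  and join_le: "x \<le> w \<Longrightarrow> y \<le> w \<Longrightarrow> join x y \<le> w"
proof -
  obtain s where s: "is_sup x y s" using H by blast
  then have j: "join x y = s" by (rule is_sup_join)
  show "x \<le> join x y" "y \<le> join x y" using s j by (auto simp: is_sup_def UB_def)
  show "x \<le> w \<Longrightarrow> y \<le> w \<Longrightarrow> join x y \<le> w" using s j by (auto simp: is_sup_def UB_def)
qed

lemma meet_le1: "meet (x::'a) y \<le> x" and meet_le2: "meet x y \<le> y"
  and meet_ge: "w \<le> x \<Longrightarrow> w \<le> y \<Longrightarrow> w \<le> meet x y"
proof -
  obtain s where s: "is_inf x y s" using H by blast
  then have j: "meet x y = s" by (rule is_inf_meet)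
  show "meet x y \<le> x" "meet x y \<le> y" using s j by (auto simp: is_inf_def LB_def)
  show "w \<le> x \<Longrightarrow> w \<le> y \<Longrightarrow> w \<le> meet x y" using s j by (auto simp: is_inf_def LB_def)
qed

lemma join_le_iff: "join (x::'a) y \<le> w \<longleftrightarrow> x \<le> w \<and> y \<le> w"
  by (meson join_ge1 join_ge2 join_le order_trans)

lemma le_meet_iff: "w \<le> meet (x::'a) y \<longleftrightarrow> w \<le> x \<and> w \<le> y"
  by (meson meet_le1 meet_le2 meet_ge order_trans)

lemma demorgan: "c (join a b) = meet (c a) (c b)"
proof (rule antisym)
  show "c (join a b) \<le> meet (c a) (c b)"
    by (simp add: anti join_ge1 join_ge2 le_meet_iff)
  have "join a b \<le> c (meet (c a) (c b))"
  proof (rule join_le)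
    show "a \<le> c (meet (c a) (c b))" using meet_le1 c_le cc by metis
    show "b \<le> c (meet (c a) (c b))" using meet_le2 c_le cc by metis
  qed
  then show "meet (c a) (c b) \<le> c (join a b)" by (metis c_le cc)
qed

lemma zero_unique: "x \<le> zero \<Longrightarrow> x = zero"
  using bot antisym by blast

lemma join_comm: "join (x::'a) y = join y x"
  by (rule antisym; rule join_le; simp add: join_ge1 join_ge2)

lemma join_zero: "join x zero = x"
  by (rule antisym; (rule join_le)?; simp add: bot join_ge1)

lemma meet_one: "meet x one = x"
  by (rule antisym; (rule meet_ge)?; simp add: top meet_le1)

lemma minS_UB: "MinS (UB {(a::'a), b}) = {join a b}"
proof -
  have "join a b \<in> UB {a, b}" by (simp add: UB_def join_ge1 join_ge2)
  moreover have "\<And>w. w \<in> UB {a, b} \<Longrightarrow> join a b \<le> w" by (simp add: UB_def join_le)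
  ultimately show ?thesis unfolding MinS_def by (auto intro: antisym)
qed

end

locale bl = bl0 +
  assumes cm: "\<forall>x. meet x (c x) = zero"
    and DO: "\<forall>a b. meet a b = zero \<longrightarrow> a \<le> c b"
begin

lemma resid: "meet x y \<le> z \<longleftrightarrow> x \<le> join (c y) z"
proof
  assume a: "meet x y \<le> z"
  have "meet x (c (join (c y) z)) = zero"
  proof -
    have "meet x (c (join (c y) z)) = meet x (meet y (c z))" by (simp add: demorgan)
    also have "\<dots> \<le> meet z (c z)"
      by (meson a le_meet_iff order_refl order_trans)
    also have "\<dots> = zero" using cm by blast
    finally show ?thesis by (rule zero_unique)
  qed
  then have "x \<le> c (c (join (c y) z))" by (rule DO[rule_format])
  then show "x \<le> join (c y) z" by (simp only: cc)
next
  assume a: "x \<le> join (c y) z"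
  let ?t = "join (c y) z"
  have ct: "c ?t = meet y (c z)" by (simp add: demorgan)
  have "meet (meet x y) (c z) \<le> meet ?t (c ?t)"
    unfolding ct by (meson a le_meet_iff order_refl order_trans)
  also have "\<dots> = zero" using cm by blast
  finally have "meet (meet x y) (c z) = zero" by (rule zero_unique)
  then have "meet x y \<le> c (c z)" by (rule DO[rule_format])
  then show "meet x y \<le> z" by (simp only: cc)
qed

lemma dresid: "(w::'a) \<le> join x v \<longleftrightarrow> meet w (c x) \<le> v"
proof -
  have "meet w (c x) \<le> v \<longleftrightarrow> w \<le> join (c (c x)) v" by (rule resid)
  then show ?thesis by (simp only: cc)
qed

lemma distrib: "join (x::'a) (meet y z) = meet (join x y) (join x z)"
proof (rule antisym)
  show "join x (meet y z) \<le> meet (join x y) (join x z)"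
    by (meson join_ge1 join_ge2 join_le le_meet_iff meet_le1 meet_le2 order_trans)
  let ?q = "meet (join x y) (join x z)"
  have "meet ?q (c x) \<le> y" using dresid meet_le1 by blast
  moreover have "meet ?q (c x) \<le> z" using dresid meet_le2 by blast
  ultimately have "meet ?q (c x) \<le> meet y z" by (simp add: le_meet_iff)
  then show "?q \<le> join x (meet y z)" using dresid by blast
qed

end

theorem proposition3:
  fixes c :: "'a::order \<Rightarrow> 'a" and zero one :: 'a
  assumes "bounded_inv_poset c zero one"
    and "orthogonal c"
    and "orthocomplemented c one"
    and "lub_complete TYPE('a)"
  shows "boolean_alg c zero one \<longleftrightarrow>
    (\<exists>odot :: 'a \<Rightarrow> 'a \<Rightarrow> 'a set. \<forall>x y z.
        leq1 (odot x y) {z} \<longleftrightarrow> leq2 {x} (implC c y z))"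
proof
  assume B: "boolean_alg c zero one"
  have B': "(\<forall>x y::'a. (\<exists>s. is_sup x y s) \<and> (\<exists>i. is_inf x y i)) \<and>
     (\<forall>x y z::'a. join x (meet y z) = meet (join x y) (join x z)) \<and>
     (\<forall>x. join x (c x) = one \<and> meet x (c x) = zero)"
    using B unfolding boolean_alg_def .
  have H: "\<forall>x y::'a. (\<exists>s. is_sup x y s) \<and> (\<exists>i. is_inf x y i)"
    using B' by (rule conjunct1)
  note D = conjunct1[OF conjunct2[OF B'], rule_format]
  note JM = conjunct2[OF conjunct2[OF B'], rule_format]
  have J: "\<And>x. join x (c x) = one" using JM by (rule conjunct1)
  have M: "\<And>x. meet x (c x) = zero" using JM by (rule conjunct2)
  interpret bl0 c zero one using assms(1) H by unfold_locales
  have DO: "\<forall>a b. meet a b = zero \<longrightarrow> a \<le> c b"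
  proof (intro allI impI)
    fix a b assume ab: "meet a b = zero"
    have "c b = join (c b) (meet a b)" by (simp add: ab join_zero)
    also have "\<dots> = meet (join (c b) a) (join (c b) b)" by (rule D)
    also have "join (c b) b = one" using J join_comm by metis
    finally have "c b = join (c b) a" by (simp add: meet_one)
    then show "a \<le> c b" by (metis join_ge2)
  qed
  interpret bl c zero one by unfold_locales (rule allI, rule M, rule DO)
  show "\<exists>odot :: 'a \<Rightarrow> 'a \<Rightarrow> 'a set. \<forall>x y z.
        leq1 (odot x y) {z} \<longleftrightarrow> leq2 {x} (implC c y z)"
    by (rule exI[of _ "\<lambda>x y. {meet x y}"])
       (simp add: leq1_def leq2_def implC_def minS_UB resid)
next
  assume "\<exists>odot :: 'a \<Rightarrow> 'a \<Rightarrow> 'a set. \<forall>x y z.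
        leq1 (odot x y) {z} \<longleftrightarrow> leq2 {x} (implC c y z)"
  then obtain odot :: "'a \<Rightarrow> 'a \<Rightarrow> 'a set" where od:
    "\<And>x y z. leq1 (odot x y) {z} \<longleftrightarrow> leq2 {x} (implC c y z)" by blast
  have bot: "\<And>x. zero \<le> x" and top: "\<And>x. x \<le> one"
    and anti: "\<And>x y. x \<le> y \<Longrightarrow> c y \<le> c x" and cc: "\<And>x. c (c x) = x"
    using assms(1) unfolding bounded_inv_poset_def by auto
  have c1: "c one = zero" by (metis anti antisym bot cc top)
  have oc: "\<And>x. is_sup x (c x) one" using assms(3) unfolding orthocomplemented_def by blast
  have z0: "x = zero" if "x \<le> v" "x \<le> c v" for x v
  proof -
    have "v \<le> c x" by (metis anti cc that(2))
    moreover have "c v \<le> c x" using anti that(1) by blast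
    ultimately have "one \<le> c x" using oc[of v] unfolding is_sup_def UB_def by auto
    then have "c x = one" using top antisym by blast
    then show ?thesis by (metis c1 cc)
  qed
  have SS: "x \<le> c y" if u: "\<And>u. c y \<le> u \<Longrightarrow> c x \<le> u \<Longrightarrow> u = one" for x y
  proof -
    have "leq2 {x} (implC c y x)"
      unfolding leq2_def implC_def MinS_def UB_def by auto
    then have a1: "leq1 (odot x y) {x}" using od by blast
    have "leq2 {x} (implC c y (c x))"
      unfolding leq2_def implC_def MinS_def UB_def using u top by auto
    then have a2: "leq1 (odot x y) {c x}" using od by blast
    have "leq1 (odot x y) {zero}"
      unfolding leq1_def
    proof (intro ballI bexI)
      fix s assume "s \<in> odot x y"
      then have "s \<le> x" "s \<le> c x" using a1 a2 unfolding leq1_def by auto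
      then show "s \<le> zero" using z0 by simp
    qed simp
    then have "leq2 {x} (implC c y zero)" using od by blast
    moreover have "c y \<in> implC c y zero"
      unfolding implC_def MinS_def UB_def using bot antisym by auto
    ultimately show ?thesis unfolding leq2_def by auto
  qed
  have DO: "a \<le> c b" if ab: "\<And>v. v \<le> a \<Longrightarrow> v \<le> b \<Longrightarrow> v = zero" for a b
  proof (rule SS)
    fix u assume "c b \<le> u" "c a \<le> u"
    then have "c u \<le> b" "c u \<le> a" by (metis anti cc)+
    then have "c u = zero" using ab by blast
    then show "u = one" by (metis c1 cc)
  qed
  have inf: "\<exists>m. is_inf x y m" for x y :: 'a
  proof -
    have "zero \<in> LB {x, y}" unfolding LB_def using bot by auto
    moreover have "finite {x, y}" by simp
    ultimately have "\<exists>m\<in>MaxS (LB {x, y}). zero \<le> m"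
      using assms(4) unfolding lub_complete_def by (elim allE[of _ "{x, y}"]) blast
    then obtain m where m: "m \<in> MaxS (LB {x, y})" by blast
    have mx: "m \<le> x" and my: "m \<le> y" and mmax: "\<And>t. t \<in> LB {x, y} \<Longrightarrow> m \<le> t \<Longrightarrow> t = m"
      using m unfolding MaxS_def LB_def by auto
    have "w \<le> m" if wx: "w \<le> x" and wy: "w \<le> y" for w
    proof -
      have "w \<le> c (c m)"
      proof (rule DO)
        fix v assume v: "v \<le> w" "v \<le> c m"
        then obtain s where s: "is_sup v m s" using assms(2) unfolding orthogonal_def by blast
        have vs: "v \<le> s" and ms: "m \<le> s" and sl: "\<And>t. v \<le> t \<Longrightarrow> m \<le> t \<Longrightarrow> s \<le> t"
          using s unfolding is_sup_def UB_def by auto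
        have "v \<le> x" using v(1) wx by (rule order_trans)
        then have "s \<le> x" using mx sl by blast
        moreover have "v \<le> y" using v(1) wy by (rule order_trans)
        then have "s \<le> y" using my sl by blast
        ultimately have "s \<in> LB {x, y}" unfolding LB_def by auto
        then have "s = m" using mmax ms by blast
        then have "v \<le> m" using vs by simp
        then show "v = zero" using z0 v(2) by blast
      qed
      then show ?thesis by (simp only: cc)
    qed
    then have "is_inf x y m" unfolding is_inf_def LB_def using mx my by auto
    then show ?thesis by blast
  qed
  have sup: "\<exists>s. is_sup x y s" for x y :: 'a
  proof -
    obtain m where m: "is_inf (c x) (c y) m" using inf by blast
    have m1: "m \<le> c x" and m2: "m \<le> c y" and mg: "\<And>w. w \<le> c x \<Longrightarrow> w \<le> c y \<Longrightarrow> w \<le> m"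
      using m unfolding is_inf_def LB_def by auto
    have "x \<le> c m" using anti[OF m1] by (simp only: cc)
    moreover have "y \<le> c m" using anti[OF m2] by (simp only: cc)
    moreover have "c m \<le> u" if "x \<le> u" "y \<le> u" for u
    proof -
      have "c u \<le> m" using mg anti that by blast
      then show ?thesis using anti[of "c u" m] by (simp only: cc)
    qed
    ultimately have "is_sup x y (c m)" unfolding is_sup_def UB_def by auto
    then show ?thesis by blast
  qed
  have H: "\<forall>x y::'a. (\<exists>s. is_sup x y s) \<and> (\<exists>i. is_inf x y i)"
    using inf sup by blast
  interpret bl0 c zero one using assms(1) H by unfold_locales
  have cm: "\<forall>x. meet x (c x) = zero"
    by (intro allI) (rule z0[OF meet_le1 meet_le2])
  have DO': "\<forall>a b. meet a b = zero \<longrightarrow> a \<le> c b"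
  proof (intro allI impI)
    fix a b assume ab: "meet a b = zero"
    show "a \<le> c b"
    proof (rule DO)
      fix v assume "v \<le> a" "v \<le> b"
      then have "v \<le> meet a b" by (rule meet_ge)
      then show "v = zero" unfolding ab by (rule zero_unique)
    qed
  qed
  interpret bl c zero one by unfold_locales (rule cm, rule DO')
  have J: "join x (c x) = one" for x using oc[of x] by (rule is_sup_join)
  show "boolean_alg c zero one"
    unfolding boolean_alg_def
  proof (intro conjI allI)
    fix x y z :: 'a
    show "join x (meet y z) = meet (join x y) (join x z)" by (rule distrib)
  next
    fix x :: 'a show "join x (c x) = one" by (rule J)
  next
    fix x :: 'a show "meet x (c x) = zero" using cm by blast
  qed (use H in blast)+
qed

end
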